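(* Fix a positive integer $n$, a nonzero $n$-partition $\lambda$ with $\lambda_n=0$, and an $n$-semistandard tableau $T$ of shape $\lambda$. Let $w^1\le\dots\le w^{\lambda_1}$ be the minimal defining chain for $T$, and let $\pi^{(j,1)}$, $1\le j\le\lambda_1$, be the permutations produced by the greedy procedure. Then $w^j=\pi^{(j,1)}$ for $1\le j\le\lambda_1$.
   Context: Let $\lambda=(\lambda_1,\dots,\lambda_n)$ be weakly decreasing nonnegative integers with $\lambda_n=0$, $\lambda\ne0$, identified with its Young diagram; $c_j$ is the length of column $j$. Write $(j,i)$ for the box in column $j$, row $i$. Reading order: $(l,k)\le(j,i)$ iff $l<j$, or $l=j$ and $k\ge i$; convention $(j,c_j+1)$ means $(j-1,1)$. An $n$-semistandard tableau $T$ of shape $\lambda$ has entries in $[n]$, weakly increasing along rows, strictly increasing down columns; $T(j,i)$ is its entry and $C_j$ its $j$-th column. Permutations are in one-line form, compared in the Bruhat order. A defining chain for $T$ is a sequence $w^1\le\dots\le w^{\lambda_1}$ in Bruhat order of permutations such that for each $j$, $\{w^j_1,\dots,w^j_{c_j}\}$ is the set of entries of $C_j$. The minimal defining chain is the (existing, by a result of Deodhar) defining chain $w^1\le\dots\le w^{\lambda_1}$ such that for every defining chain $v^1\le\dots\le v^{\lambda_1}$ one has $w^j\le v^j$ for all $j$. Greedy procedure: $\pi^{(1,1)}$ has first $c_1$ entries those of $C_1$ increasing, followed by the rest of $[n]$ increasing. For $(j,i)$ with $j\ge2$ in reading order from $(2,c_2)$ to $(\lambda_1,1)$, define $\pi^{(j,i)}$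 from $\pi:=\pi^{(j,i+1)}$: if $T(j-1,i)=T(j,i)$ set $\pi^{(j,i)}=\pi$; otherwise let $i_0=i$, and given $i_{x-1}$ with $\pi_{i_{x-1}}<T(j,i)$ let $i_x$ be the smallest index $>c_j$ with $\pi_{i_{x-1}}<\pi_{i_x}\le T(j,i)$, stopping at $i_m$ with $\pi_{i_m}=T(j,i)$; set $\pi^{(j,i)}_{i_x}=\pi_{i_{x-1}}$ ($1\le x\le m$), $\pi^{(j,i)}_{i_0}=\pi_{i_m}$, others unchanged. *)

theory Defs
  imports "HOL-Combinatorics.Permutations"
begin

text \<open>A partition lambda = (lambda_1,...,lambda_n) is a function nat => nat, only
  the values at 1..n matter.\<close>

definition is_npartition :: "nat \<Rightarrow> (nat \<Rightarrow> nat) \<Rightarrow> bool" where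
  "is_npartition n lam \<longleftrightarrow> (\<forall>i j. 1 \<le> i \<longrightarrow> i \<le> j \<longrightarrow> j \<le> n \<longrightarrow> lam j \<le> lam i)"

definition col_len :: "nat \<Rightarrow> (nat \<Rightarrow> nat) \<Rightarrow> nat \<Rightarrow> nat" where
  "col_len n lam j = card {i \<in> {1..n}. j \<le> lam i}"

text \<open>T j i is the entry in column j, row i.\<close>
definition is_sstableau :: "nat \<Rightarrow> (nat \<Rightarrow> nat) \<Rightarrow> (nat \<Rightarrow> nat \<Rightarrow> nat) \<Rightarrow> bool" where
  "is_sstableau n lam T \<longleftrightarrow>
     (\<forall>j i. 1 \<le> j \<longrightarrow> j \<le> lam 1 \<longrightarrow> 1 \<le> i \<longrightarrow> i \<le> col_len n lam j \<longrightarrow> T j i \<in> {1..n}) \<and>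
     (\<forall>j i. 1 \<le> j \<longrightarrow> j + 1 \<le> lam 1 \<longrightarrow> 1 \<le> i \<longrightarrow> i \<le> col_len n lam (j + 1) \<longrightarrow>
            T j i \<le> T (j + 1) i) \<and>
     (\<forall>j i. 1 \<le> j \<longrightarrow> j \<le> lam 1 \<longrightarrow> 1 \<le> i \<longrightarrow> i + 1 \<le> col_len n lam j \<longrightarrow>
            T j i < T j (i + 1))"

definition col_set :: "nat \<Rightarrow> (nat \<Rightarrow> nat) \<Rightarrow> (nat \<Rightarrow> nat \<Rightarrow> nat) \<Rightarrow> nat \<Rightarrow> nat set" where
  "col_set n lam T j = T j ` {1..col_len n lam j}"

definition inv_count :: "nat \<Rightarrow> (nat \<Rightarrow> nat) \<Rightarrow> nat" where
  "inv_count n w = card {(a, b). 1 \<le> a \<and> a < b \<and> b \<le> n \<and> w b < w a}"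

definition bruhat_step :: "nat \<Rightarrow> (nat \<Rightarrow> nat) \<Rightarrow> (nat \<Rightarrow> nat) \<Rightarrow> bool" where
  "bruhat_step n u v \<longleftrightarrow> u permutes {1..n} \<and>
     (\<exists>a b. 1 \<le> a \<and> a < b \<and> b \<le> n \<and>
        v = (\<lambda>k. if k = a then u b else if k = b then u a else u k) \<and>
        inv_count n u < inv_count n v)"

definition bruhat_le :: "nat \<Rightarrow> (nat \<Rightarrow> nat) \<Rightarrow> (nat \<Rightarrow> nat) \<Rightarrow> bool" where
  "bruhat_le n u v \<longleftrightarrow> u permutes {1..n} \<and> v permutes {1..n} \<and> (bruhat_step n)\<^sup>*\<^sup>* u v"

definition defining_chain ::
  "nat \<Rightarrow> (nat \<Rightarrow> nat) \<Rightarrow> (nat \<Rightarrow> nat \<Rightarrow> nat) \<Rightarrow> (nat \<Rightarrow> nat \<Rightarrow> nat) \<Rightarrow> bool" where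
  "defining_chain n lam T w \<longleftrightarrow>
     (\<forall>j. 1 \<le> j \<longrightarrow> j \<le> lam 1 \<longrightarrow> w j permutes {1..n}) \<and>
     (\<forall>j. 1 \<le> j \<longrightarrow> j < lam 1 \<longrightarrow> bruhat_le n (w j) (w (j + 1))) \<and>
     (\<forall>j. 1 \<le> j \<longrightarrow> j \<le> lam 1 \<longrightarrow> w j ` {1..col_len n lam j} = col_set n lam T j)"

definition minimal_defining_chain ::
  "nat \<Rightarrow> (nat \<Rightarrow> nat) \<Rightarrow> (nat \<Rightarrow> nat \<Rightarrow> nat) \<Rightarrow> (nat \<Rightarrow> nat \<Rightarrow> nat) \<Rightarrow> bool" where
  "minimal_defining_chain n lam T w \<longleftrightarrow> defining_chain n lam T w \<and>
     (\<forall>v. defining_chain n lam T v \<longrightarrow>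
        (\<forall>j. 1 \<le> j \<longrightarrow> j \<le> lam 1 \<longrightarrow> bruhat_le n (w j) (v j)))"

definition greedy_init :: "nat \<Rightarrow> (nat \<Rightarrow> nat) \<Rightarrow> (nat \<Rightarrow> nat \<Rightarrow> nat) \<Rightarrow> nat \<Rightarrow> nat" where
  "greedy_init n lam T k =
     (let c = col_len n lam 1;
          C = sorted_list_of_set (col_set n lam T 1);
          R = sorted_list_of_set ({1..n} - col_set n lam T 1)
      in if 1 \<le> k \<and> k \<le> c then C ! (k - 1)
         else if c < k \<and> k \<le> n then R ! (k - c - 1)
         else k)"

fun greedy_idx :: "nat \<Rightarrow> nat \<Rightarrow> nat \<Rightarrow> nat \<Rightarrow> (nat \<Rightarrow> nat) \<Rightarrow> nat \<Rightarrow> nat" where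
  "greedy_idx n c t i p 0 = i"
| "greedy_idx n c t i p (Suc x) =
     (LEAST k. c < k \<and> k \<le> n \<and> p (greedy_idx n c t i p x) < p k \<and> p k \<le> t)"

text \<open>One step: from pi = pi^(j,i+1) to pi^(j,i).\<close>
definition greedy_step ::
  "nat \<Rightarrow> (nat \<Rightarrow> nat) \<Rightarrow> (nat \<Rightarrow> nat \<Rightarrow> nat) \<Rightarrow> nat \<Rightarrow> nat \<Rightarrow> (nat \<Rightarrow> nat) \<Rightarrow> (nat \<Rightarrow> nat)" where
  "greedy_step n lam T j i p =
     (if T (j - 1) i = T j i then p
      else
        (let c = col_len n lam j; t = T j i;
             s = greedy_idx n c t i p;
             m = (LEAST m. p (s m) = t)
         in (\<lambda>k. if k = s 0 then p (s m)
                 else if (\<exists>x. 1 \<le> x \<and> x \<le> m \<and> k = s x)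
                   then p (s ((SOME x. 1 \<le> x \<and> x \<le> m \<and> k = s x) - 1))
                 else p k)))"

text \<open>Process column j in reading order (rows c_j, c_j - 1, ..., 1),
  starting from pi^(j, c_j + 1) = pi^(j-1, 1); the result is pi^(j,1).\<close>
definition greedy_col ::
  "nat \<Rightarrow> (nat \<Rightarrow> nat) \<Rightarrow> (nat \<Rightarrow> nat \<Rightarrow> nat) \<Rightarrow> nat \<Rightarrow> (nat \<Rightarrow> nat) \<Rightarrow> (nat \<Rightarrow> nat)" where
  "greedy_col n lam T j p = fold (greedy_step n lam T j) (rev [1..<col_len n lam j + 1]) p"

text \<open>greedy n lam T j = pi^(j,1).\<close>
fun greedy :: "nat \<Rightarrow> (nat \<Rightarrow> nat) \<Rightarrow> (nat \<Rightarrow> nat \<Rightarrow> nat) \<Rightarrow> nat \<Rightarrow> (nat \<Rightarrow> nat)" where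
  "greedy n lam T 0 = greedy_init n lam T"
| "greedy n lam T (Suc 0) = greedy_init n lam T"
| "greedy n lam T (Suc (Suc j)) = greedy_col n lam T (Suc (Suc j)) (greedy n lam T (Suc j))"

end

theory Submission
  imports Defs
begin

definition swp :: "(nat \<Rightarrow> nat) \<Rightarrow> nat \<Rightarrow> nat \<Rightarrow> nat \<Rightarrow> nat" where
  "swp f a b = (\<lambda>k. if k = a then f b else if k = b then f a else f k)"

lemma swp_permutes:
  assumes "f permutes {1..n}" "a \<in> {1..n}" "b \<in> {1..n}"
  shows "swp f a b permutes {1..n}"
proof -
  have "swp f a b = f \<circ> Transposition.transpose a b"
    by (auto simp: swp_def fun_eq_iff Transposition.transpose_def)
  thus ?thesis using permutes_compose[OF permutes_swap_id[OF assms(2,3)] assms(1)] by simp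
qed

definition invs :: "nat \<Rightarrow> (nat \<Rightarrow> nat) \<Rightarrow> (nat \<times> nat) set" where
  "invs n w = {(a, b). 1 \<le> a \<and> a < b \<and> b \<le> n \<and> w b < w a}"

lemma inv_count_invs: "inv_count n w = card (invs n w)"
  by (simp add: inv_count_def invs_def)

lemma finite_invs: "finite (invs n w)"
  by (rule finite_subset[of _ "{1..n} \<times> {1..n}"]) (auto simp: invs_def)

lemma inv_count_swp:
  assumes ab: "1 \<le> a" "a < b" "b \<le> n" and lt: "u a < u b"
  shows "inv_count n u < inv_count n (swp u a b)"
proof -
  define v where "v = swp u a b"
  define sg where "sg = (\<lambda>x::nat. if x = a then b else if x = b then a else x)"
  define mid where "mid = (\<lambda>x::nat. a < x \<and> x < b)"
  define psi where "psi = (\<lambda>(x,y). if mid x \<or> mid y then (x,y) else (sg x, sg y))"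
  have inj: "inj psi"
    unfolding inj_def psi_def sg_def mid_def using ab by (auto split: if_splits)
  have sub: "psi ` invs n u \<subseteq> invs n v"
  proof
    fix z assume "z \<in> psi ` invs n u"
    then obtain x y where xy: "(x,y) \<in> invs n u" "z = psi (x,y)" by auto
    show "z \<in> invs n v"
      using xy ab lt unfolding invs_def psi_def sg_def mid_def v_def swp_def
      by (auto split: if_splits)
  qed
  have ab_in: "(a,b) \<in> invs n v" using ab lt by (auto simp: invs_def v_def swp_def)
  have ab_out: "(a,b) \<notin> psi ` invs n u"
  proof
    assume "(a,b) \<in> psi ` invs n u"
    then obtain x y where xy: "(x,y) \<in> invs n u" "(a,b) = psi (x,y)" by auto
    thus False using ab lt unfolding invs_def psi_def sg_def mid_def
      by (auto split: if_splits)
  qed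
  have "card (invs n u) = card (psi ` invs n u)"
    using inj by (simp add: card_image inj_on_subset)
  also have "\<dots> < card (invs n v)"
    using sub ab_in ab_out finite_invs by (intro psubset_card_mono) auto
  finally show ?thesis by (simp add: inv_count_invs v_def)
qed

lemma bruhat_step_swp:
  assumes "u permutes {1..n}" "1 \<le> a" "a < b" "b \<le> n" "u a < u b"
  shows "bruhat_step n u (swp u a b)"
  using assms inv_count_swp[of a b n u] unfolding bruhat_step_def
  by (intro conjI exI[of _ a] exI[of _ b]) (auto simp: swp_def)

definition tle :: "(nat \<Rightarrow> nat) \<Rightarrow> (nat \<Rightarrow> nat) \<Rightarrow> bool" where
  "tle u v \<longleftrightarrow> (\<forall>k a. card (v ` {1..k} \<inter> {..<a}) \<le> card (u ` {1..k} \<inter> {..<a}))"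

lemma tle_refl: "tle u u" by (simp add: tle_def)

lemma tle_trans: "tle u v \<Longrightarrow> tle v w \<Longrightarrow> tle u w"
  unfolding tle_def by (meson le_trans)

lemma card_below_eq_imp_eq:
  fixes A B :: "nat set"
  assumes "finite A" "finite B" "\<And>a. card (A \<inter> {..<a}) = card (B \<inter> {..<a})"
  shows "A = B"
proof -
  have key: "x \<in> A \<longleftrightarrow> x \<in> B" for x
  proof -
    have eA: "card (A \<inter> {..<Suc x}) = card (A \<inter> {..<x}) + (if x \<in> A then 1 else 0)"
    proof -
      have "A \<inter> {..<Suc x} = (if x \<in> A then insert x (A \<inter> {..<x}) else A \<inter> {..<x})"
        by (auto simp: less_Suc_eq)
      thus ?thesis using assms(1) by auto
    qed
    have eB: "card (B \<inter> {..<Suc x}) = card (B \<inter> {..<x}) + (if x \<in> B then 1 else 0)"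
    proof -
      have "B \<inter> {..<Suc x} = (if x \<in> B then insert x (B \<inter> {..<x}) else B \<inter> {..<x})"
        by (auto simp: less_Suc_eq)
      thus ?thesis using assms(2) by auto
    qed
    show ?thesis using eA eB assms(3)[of x] assms(3)[of "Suc x"]
      by (cases "x \<in> A"; cases "x \<in> B") simp_all
  qed
  thus ?thesis by auto
qed

lemma tle_antisym:
  assumes "u permutes {1..n}" "v permutes {1..n}" "tle u v" "tle v u"
  shows "u = v"
proof
  fix k
  have P: "u ` {1..m} = v ` {1..m}" for m
  proof (rule card_below_eq_imp_eq)
    fix a
    show "card (u ` {1..m} \<inter> {..<a}) = card (v ` {1..m} \<inter> {..<a})"
      using assms(3,4) unfolding tle_def by (meson le_antisym)
  qed auto
  show "u k = v k"
  proof (cases "k = 0")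
    case True
    thus ?thesis using assms(1,2) by (simp add: permutes_not_in)
  next
    case False
    have iu: "inj u" "inj v" using assms(1,2) permutes_inj by auto
    have k1: "{1..k} = insert k {1..k-1}" using False by auto
    have A: "u ` {1..k} = insert (u k) (u ` {1..k-1})" "v ` {1..k} = insert (v k) (v ` {1..k-1})"
      by (subst k1, simp)+
    have B: "u k \<notin> u ` {1..k-1}" "v k \<notin> v ` {1..k-1}"
      using iu False by (auto simp: inj_eq)
    have "k \<in> {1..k}" using False by simp
    hence "u k \<in> u ` {1..k}" by (rule imageI)
    hence "u k \<in> v ` {1..k}" by (simp only: P)
    hence "u k \<in> insert (v k) (u ` {1..k-1})" by (simp only: A(2) P)
    thus ?thesis using B(1) by blast
  qed
qed

lemma card_swap_below:
  fixes A :: "nat set"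
  assumes "finite A" "z \<in> A" "y \<notin> A" "z < y"
  shows "card (insert y (A - {z}) \<inter> {..<x}) \<le> card (A \<inter> {..<x})"
proof (cases "y < x")
  case True
  have "insert y (A - {z}) \<inter> {..<x} = insert y ((A \<inter> {..<x}) - {z})" using True by auto
  moreover have "z \<in> A \<inter> {..<x}" using True assms by auto
  moreover have "finite (A \<inter> {..<x})" using assms by simp
  moreover have "y \<notin> (A \<inter> {..<x}) - {z}" using assms by auto
  ultimately have "card (insert y (A - {z}) \<inter> {..<x}) = card ((A \<inter> {..<x}) - {z}) + 1"
    by simp
  also have "\<dots> = card (A \<inter> {..<x})"
    using \<open>z \<in> A \<inter> {..<x}\<close> \<open>finite (A \<inter> {..<x})\<close>
    by (metis Suc_eq_plus1 card_Diff1_less card_Suc_Diff1)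
  finally show ?thesis by simp
next
  case False
  have "insert y (A - {z}) \<inter> {..<x} \<subseteq> A \<inter> {..<x}" using False by auto
  thus ?thesis using assms by (simp add: card_mono)
qed

lemma swp_image:
  assumes "a \<in> S" "b \<in> S" shows "swp u a b ` S = u ` S"
proof -
  have "swp u a b = u \<circ> Transposition.transpose a b"
    by (auto simp: swp_def fun_eq_iff Transposition.transpose_def)
  moreover have "Transposition.transpose a b ` S = S"
    using assms by (simp add: permutes_image permutes_swap_id)
  ultimately show ?thesis by (metis image_comp)
qed

lemma bruhat_step_tle:
  assumes "bruhat_step n u v"
  shows "tle u v"
proof -
  from assms obtain a b where up: "u permutes {1..n}" and ab: "1 \<le> a" "a < b" "b \<le> n"
    and v: "v = swp u a b" and ic: "inv_count n u < inv_count n v"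
    unfolding bruhat_step_def swp_def by blast
  have iu: "inj u" using up permutes_inj by auto
  have lt: "u a < u b"
  proof (rule ccontr)
    assume "\<not> u a < u b"
    moreover have "u a \<noteq> u b" using iu ab by (auto simp: inj_eq)
    ultimately have "u b < u a" by simp
    hence "v a < v b" using v ab by (simp add: swp_def)
    hence "inv_count n v < inv_count n (swp v a b)" using inv_count_swp ab by blast
    moreover have "swp v a b = u" using v ab by (auto simp: swp_def fun_eq_iff)
    ultimately show False using ic by simp
  qed
  show ?thesis unfolding tle_def
  proof (intro allI)
    fix k x
    show "card (v ` {1..k} \<inter> {..<x}) \<le> card (u ` {1..k} \<inter> {..<x})"
    proof (cases "a \<le> k \<and> k < b")
      case True
      have k1: "{1..k} = insert a ({1..k} - {a})" using True ab by auto
      have "v ` ({1..k} - {a}) = u ` ({1..k} - {a})"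
        using True unfolding v swp_def by (intro image_cong) auto
      moreover have "u ` ({1..k} - {a}) = u ` {1..k} - {u a}"
        using iu by (simp add: image_set_diff)
      moreover have "v a = u b" using v by (simp add: swp_def)
      ultimately have "v ` {1..k} = insert (u b) (u ` {1..k} - {u a})"
        using k1 by (metis image_insert)
      moreover have "u a \<in> u ` {1..k}" "u b \<notin> u ` {1..k}"
        using True ab iu by (auto simp: inj_eq)
      ultimately show ?thesis using card_swap_below lt by simp
    next
      case False
      have "v ` {1..k} = u ` {1..k}"
      proof (cases "k < a")
        case True thus ?thesis using ab unfolding v swp_def by (auto intro!: image_cong)
      next
        case False
        hence "b \<le> k" using \<open>\<not> (a \<le> k \<and> k < b)\<close> by simp
        hence "a \<in> {1..k}" "b \<in> {1..k}" using ab by auto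
        thus ?thesis unfolding v by (rule swp_image)
      qed
      thus ?thesis by simp
    qed
  qed
qed

lemma bruhat_le_tle:
  assumes "bruhat_le n u v" shows "tle u v"
proof -
  have "(bruhat_step n)\<^sup>*\<^sup>* u v" using assms by (simp add: bruhat_le_def)
  thus ?thesis
  proof (induction rule: rtranclp_induct)
    case base thus ?case by (rule tle_refl)
  next
    case (step y z) thus ?case using tle_trans bruhat_step_tle by blast
  qed
qed

lemma swp_image_out:
  assumes "inj f" "a \<in> S" "b \<notin> S"
  shows "swp f a b ` S = insert (f b) (f ` S - {f a})"
proof -
  have S1: "S = insert a (S - {a})" using assms by auto
  have "swp f a b ` (S - {a}) = f ` (S - {a})"
    using assms unfolding swp_def by (intro image_cong) auto
  moreover have "f ` (S - {a}) = f ` S - {f a}"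
    using assms(1) by (simp add: image_set_diff)
  moreover have "swp f a b a = f b" by (simp add: swp_def)
  ultimately show ?thesis using S1 by (metis image_insert)
qed

lemma nat_cross:
  fixes f :: "nat \<Rightarrow> nat"
  assumes "f 0 \<le> k" "k < f m"
  shows "\<exists>r<m. f r \<le> k \<and> k < f (Suc r)"
  using assms
proof (induction m)
  case 0 thus ?case by simp
next
  case (Suc m)
  show ?case
  proof (cases "k < f m")
    case True
    then obtain r where "r < m" "f r \<le> k" "k < f (Suc r)" using Suc by blast
    thus ?thesis by (intro exI[of _ r]) auto
  next
    case False
    thus ?thesis using Suc.prems by (intro exI[of _ m]) auto
  qed
qed

definition gstep :: "nat \<Rightarrow> nat \<Rightarrow> nat \<Rightarrow> nat \<Rightarrow> (nat \<Rightarrow> nat) \<Rightarrow> (nat \<Rightarrow> nat)" where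
  "gstep n c t i p =
     (let s = greedy_idx n c t i p;
          m = (LEAST m. p (s m) = t)
      in (\<lambda>k. if k = s 0 then p (s m)
              else if (\<exists>x. 1 \<le> x \<and> x \<le> m \<and> k = s x)
                then p (s ((SOME x. 1 \<le> x \<and> x \<le> m \<and> k = s x) - 1))
              else p k))"

lemma greedy_step_gstep:
  "greedy_step n lam T j i p =
     (if T (j - 1) i = T j i then p else gstep n (col_len n lam j) (T j i) i p)"
  by (simp add: greedy_step_def gstep_def Let_def)

locale gsetup =
  fixes n c t i :: nat and p :: "nat \<Rightarrow> nat"
  assumes pp: "p permutes {1..n}" and i1: "1 \<le> i" and ic: "i \<le> c" and cn: "c \<le> n"
    and pit: "p i < t" and tn: "t \<le> n" and G: "\<forall>q\<in>{1..c}. \<not> (p i < p q \<and> p q \<le> t)"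
begin

abbreviation "s \<equiv> greedy_idx n c t i p"

lemma injp: "inj p" using pp permutes_inj by auto

lemma pos_t: "\<exists>q. c < q \<and> q \<le> n \<and> p q = t"
proof -
  have "p i \<ge> 1"
  proof (rule ccontr)
    assume "\<not> p i \<ge> 1"
    hence "p i = 0" by simp
    have "i \<in> {1..n}" using i1 ic cn by simp
    hence "p i \<in> {1..n}" using permutes_image[OF pp] by blast
    thus False using \<open>p i = 0\<close> by simp
  qed
  hence "t \<in> {1..n}" using pit tn by simp
  then obtain q where q: "q \<in> {1..n}" "p q = t" using permutes_image[OF pp] by (metis imageE)
  have "c < q"
  proof (rule ccontr)
    assume "\<not> c < q"
    hence "q \<in> {1..c}" using q by simp
    thus False using G pit q by auto
  qed
  thus ?thesis using q by auto
qed

lemma s0: "s 0 = i" by simp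

lemma sSuc: "s (Suc x) = (LEAST k. c < k \<and> k \<le> n \<and> p (s x) < p k \<and> p k \<le> t)"
  by simp

lemma s_next:
  assumes "p (s x) < t"
  shows "c < s (Suc x) \<and> s (Suc x) \<le> n \<and> p (s x) < p (s (Suc x)) \<and> p (s (Suc x)) \<le> t"
    and "\<And>k. c < k \<Longrightarrow> k \<le> n \<Longrightarrow> p (s x) < p k \<Longrightarrow> p k \<le> t \<Longrightarrow> s (Suc x) \<le> k"
proof -
  obtain q where q: "c < q" "q \<le> n" "p q = t" using pos_t by blast
  have ex: "\<exists>k. c < k \<and> k \<le> n \<and> p (s x) < p k \<and> p k \<le> t"
    using q assms by (intro exI[of _ q]) auto
  show "c < s (Suc x) \<and> s (Suc x) \<le> n \<and> p (s x) < p (s (Suc x)) \<and> p (s (Suc x)) \<le> t"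
    unfolding sSuc by (rule LeastI_ex[OF ex])
  fix k assume "c < k" "k \<le> n" "p (s x) < p k" "p k \<le> t"
  thus "s (Suc x) \<le> k" unfolding sSuc by (intro Least_le) auto
qed

lemma s_bound:
  "(\<forall>y<x. p (s y) < t) \<Longrightarrow> p (s x) \<le> t \<and> p i + x \<le> p (s x)"
proof (induction x)
  case 0 thus ?case using pit by simp
next
  case (Suc x)
  hence IH: "p (s x) \<le> t \<and> p i + x \<le> p (s x)" by simp
  have "p (s x) < t" using Suc.prems by simp
  from s_next(1)[OF this] IH show ?case by simp
qed

lemma ex_m: "\<exists>x. p (s x) = t"
proof (rule ccontr)
  assume "\<not> (\<exists>x. p (s x) = t)"
  hence all: "\<forall>x. p (s x) < t"
  proof -
    assume ne: "\<not> (\<exists>x. p (s x) = t)"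
    have "\<forall>y<x. p (s y) < t" for x
    proof (induction x)
      case 0 thus ?case by simp
    next
      case (Suc x)
      have "p (s x) \<le> t" using s_bound Suc by blast
      hence "p (s x) < t" using ne by (simp add: order_le_less)
      thus ?case using Suc by (auto simp: less_Suc_eq)
    qed
    thus ?thesis by blast
  qed
  have "p i + (t + 1) \<le> p (s (t + 1))" using s_bound all by blast
  moreover have "p (s (t + 1)) \<le> t" using all less_imp_le by blast
  ultimately show False by simp
qed

definition "m = (LEAST m. p (s m) = t)"

lemma psm: "p (s m) = t" unfolding m_def using ex_m by (rule LeastI_ex)

lemma below_m: "y < m \<Longrightarrow> p (s y) < t"
proof (induction y rule: less_induct)
  case (less y)
  have "\<forall>z<y. p (s z) < t" using less by simp
  hence "p (s y) \<le> t" using s_bound by blast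
  moreover have "p (s y) \<noteq> t" using less.prems unfolding m_def using not_less_Least by blast
  ultimately show ?case by simp
qed

lemma m_pos: "0 < m"
proof (rule ccontr)
  assume "\<not> 0 < m" hence "m = 0" by simp
  thus False using psm pit by simp
qed

lemma step_facts:
  assumes "x < m"
  shows "c < s (Suc x)" "s (Suc x) \<le> n" "p (s x) < p (s (Suc x))" "p (s (Suc x)) \<le> t"
    and "\<And>k. c < k \<Longrightarrow> k \<le> n \<Longrightarrow> p (s x) < p k \<Longrightarrow> p k \<le> t \<Longrightarrow> s (Suc x) \<le> k"
  using s_next[OF below_m[OF assms]] by auto

lemma s_gt_c: "1 \<le> y \<Longrightarrow> y \<le> m \<Longrightarrow> c < s y \<and> s y \<le> n"
  using step_facts(1,2)[of "y - 1"] by simp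

lemma s_mono_Suc: "x < m \<Longrightarrow> s x < s (Suc x)"
proof (cases x)
  case 0
  assume "x < m" thus ?thesis using 0 step_facts(1)[of 0] ic by simp
next
  case (Suc x')
  assume xm: "x < m"
  have a: "p (s x') < p (s x)" using step_facts(3)[of x'] xm Suc by simp
  have b: "p (s x) < p (s (Suc x))" "p (s (Suc x)) \<le> t" "c < s (Suc x)" "s (Suc x) \<le> n"
    using step_facts[of x] xm by auto
  have "s x \<le> s (Suc x)"
    using step_facts(5)[of x' "s (Suc x)"] a b xm Suc by simp
  moreover have "s x \<noteq> s (Suc x)" using b(1) by auto
  ultimately show ?thesis by simp
qed

lemma pv_mono_Suc: "x < m \<Longrightarrow> p (s x) < p (s (Suc x))"
  using step_facts(3) by simp

lemma s_mono: "x < y \<Longrightarrow> y \<le> m \<Longrightarrow> s x < s y"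
proof (induction y)
  case 0 thus ?case by simp
next
  case (Suc y)
  have "s y < s (Suc y)" using s_mono_Suc Suc.prems by simp
  thus ?case using Suc by (cases "x < y") (auto simp del: greedy_idx.simps simp: less_Suc_eq)
qed

lemma pv_mono: "x < y \<Longrightarrow> y \<le> m \<Longrightarrow> p (s x) < p (s y)"
proof (induction y)
  case 0 thus ?case by simp
next
  case (Suc y)
  have "p (s y) < p (s (Suc y))" using pv_mono_Suc Suc.prems by simp
  thus ?case using Suc by (cases "x < y") (auto simp del: greedy_idx.simps simp: less_Suc_eq)
qed

lemma s_inj: "x \<le> m \<Longrightarrow> y \<le> m \<Longrightarrow> s x = s y \<Longrightarrow> x = y"
  using s_mono by (metis less_irrefl nat_neq_iff)

lemma no_gap:
  assumes "r < m" "1 \<le> q" "q < s (Suc r)" "p (s r) < p q" "p q \<le> t"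
  shows False
proof (cases "q \<le> c")
  case True
  have "p i \<le> p (s r)" using pv_mono[of 0 r] assms(1) by (cases r) auto
  thus False using G True assms by auto
next
  case False
  have "s (Suc r) \<le> n" using step_facts(2) assms(1) by simp
  hence "s (Suc r) \<le> q" using step_facts(5)[OF assms(1), of q] False assms by simp
  thus False using assms(3) by simp
qed

end

context gsetup begin

primrec qq :: "nat \<Rightarrow> nat \<Rightarrow> nat" where
  "qq 0 = p"
| "qq (Suc x) = swp (qq x) i (s (Suc x))"

lemma s_ge_i: "y \<le> m \<Longrightarrow> i \<le> s y"
  using s_mono[of 0 y] by (cases y) auto

lemma qq_props:
  "x \<le> m \<Longrightarrow> qq x i = p (s x) \<and> (\<forall>y. 1 \<le> y \<and> y \<le> x \<longrightarrow> qq x (s y) = p (s (y - 1)))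
     \<and> (\<forall>k. k \<notin> s ` {0..x} \<longrightarrow> qq x k = p k) \<and> qq x permutes {1..n}
     \<and> (bruhat_step n)\<^sup>*\<^sup>* p (qq x)"
proof (induction x)
  case 0 thus ?case using pp by simp
next
  case (Suc x)
  hence IH: "qq x i = p (s x)" "\<forall>y. 1 \<le> y \<and> y \<le> x \<longrightarrow> qq x (s y) = p (s (y - 1))"
    "\<forall>k. k \<notin> s ` {0..x} \<longrightarrow> qq x k = p k" "qq x permutes {1..n}"
    "(bruhat_step n)\<^sup>*\<^sup>* p (qq x)" by auto
  define b where "b = s (Suc x)"
  have xm: "x < m" using Suc.prems by simp
  have bgt: "c < b" "b \<le> n" using s_gt_c[of "Suc x"] Suc.prems b_def by auto
  have bnot: "b \<notin> s ` {0..x}"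
  proof
    assume "b \<in> s ` {0..x}"
    then obtain y where "y \<le> x" "b = s y" by auto
    thus False using s_mono[of y "Suc x"] Suc.prems b_def by simp
  qed
  have bi: "b \<noteq> i" using bgt ic by simp
  have qb: "qq x b = p b" using IH(3) bnot by simp
  have qS: "qq (Suc x) = swp (qq x) i b" by (simp add: b_def del: greedy_idx.simps)
  have A: "qq (Suc x) i = p (s (Suc x))" using qS qb b_def by (simp add: swp_def del: greedy_idx.simps)
  have B: "\<forall>y. 1 \<le> y \<and> y \<le> Suc x \<longrightarrow> qq (Suc x) (s y) = p (s (y - 1))"
  proof (intro allI impI)
    fix y assume y: "1 \<le> y \<and> y \<le> Suc x"
    show "qq (Suc x) (s y) = p (s (y - 1))"
    proof (cases "y = Suc x")
      case True thus ?thesis using qS IH(1) b_def bi by (simp add: swp_def del: greedy_idx.simps)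
    next
      case False
      hence yx: "y \<le> x" using y by simp
      have "s y \<noteq> i" using s_gt_c[of y] y xm ic by simp
      moreover have "s y \<noteq> b" using s_mono[of y "Suc x"] yx Suc.prems b_def by simp
      ultimately show ?thesis using qS IH(2) y yx by (simp add: swp_def del: greedy_idx.simps)
    qed
  qed
  have C: "\<forall>k. k \<notin> s ` {0..Suc x} \<longrightarrow> qq (Suc x) k = p k"
  proof (intro allI impI)
    fix k assume k: "k \<notin> s ` {0..Suc x}"
    hence "k \<noteq> i" "k \<noteq> b" "k \<notin> s ` {0..x}" using b_def
      by (auto simp del: greedy_idx.simps) (metis atLeastAtMost_iff image_eqI zero_le s0)
    thus "qq (Suc x) k = p k" using qS IH(3) by (simp add: swp_def del: greedy_idx.simps)
  qed
  have i_in: "i \<in> {1..n}" using i1 ic cn by simp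
  have b_in: "b \<in> {1..n}" using bgt ic i1 by simp
  have D: "qq (Suc x) permutes {1..n}" using qS swp_permutes[OF IH(4) i_in b_in] by simp
  have "qq x i < qq x b" using IH(1) qb b_def pv_mono_Suc[OF xm] by simp
  hence "bruhat_step n (qq x) (qq (Suc x))"
    using qS bruhat_step_swp[OF IH(4) i1, of b] bgt ic by simp
  hence E: "(bruhat_step n)\<^sup>*\<^sup>* p (qq (Suc x))" using IH(5) by simp
  show ?case using A B C D E by blast
qed

lemma gstep_eq: "gstep n c t i p = qq m"
proof
  fix k
  have Q: "qq m i = p (s m)" "\<And>y. 1 \<le> y \<Longrightarrow> y \<le> m \<Longrightarrow> qq m (s y) = p (s (y - 1))"
    "\<And>k. k \<notin> s ` {0..m} \<Longrightarrow> qq m k = p k" using qq_props[of m] by auto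
  show "gstep n c t i p k = qq m k"
  proof (cases "k = i")
    case True thus ?thesis using Q(1) unfolding gstep_def Let_def m_def[symmetric] by simp
  next
    case False
    show ?thesis
    proof (cases "\<exists>x. 1 \<le> x \<and> x \<le> m \<and> k = s x")
      case True
      define y where "y = (SOME x. 1 \<le> x \<and> x \<le> m \<and> k = s x)"
      have y: "1 \<le> y \<and> y \<le> m \<and> k = s y" unfolding y_def using True by (rule someI_ex)
      have "gstep n c t i p k = p (s (y - 1))"
        using False True unfolding gstep_def Let_def m_def[symmetric] y_def[symmetric]
        by (simp del: greedy_idx.simps add: s0)
      thus ?thesis using Q(2) y by simp
    next
      case nex: False
      have "k \<notin> s ` {0..m}"
      proof
        assume "k \<in> s ` {0..m}"
        then obtain y where "y \<le> m" "k = s y" by auto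
        thus False using nex False by (cases y) auto
      qed
      hence "qq m k = p k" using Q(3) by simp
      moreover have "gstep n c t i p k = p k"
        using False nex unfolding gstep_def Let_def m_def[symmetric] by (auto simp del: greedy_idx.simps simp add: s0)
      ultimately show ?thesis by simp
    qed
  qed
qed

abbreviation "p' \<equiv> gstep n c t i p"

lemma p'_permutes: "p' permutes {1..n}" using gstep_eq qq_props[of m] by simp

lemma p'_bruhat: "bruhat_le n p p'"
  using gstep_eq qq_props[of m] pp unfolding bruhat_le_def by simp

lemma p'_i: "p' i = t" using gstep_eq qq_props[of m] psm by simp

lemma p'_other: "q \<in> {1..c} \<Longrightarrow> q \<noteq> i \<Longrightarrow> p' q = p q"
proof -
  assume q: "q \<in> {1..c}" "q \<noteq> i"
  have "q \<notin> s ` {0..m}"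
  proof
    assume "q \<in> s ` {0..m}"
    then obtain y where "y \<le> m" "q = s y" by auto
    thus False using q s_gt_c[of y] by (cases y) auto
  qed
  thus ?thesis using gstep_eq qq_props[of m] by simp
qed

lemma prefix_low: "k < i \<Longrightarrow> p' ` {1..k} = p ` {1..k}"
proof -
  assume ki: "k < i"
  have "\<forall>q\<in>{1..k}. q \<notin> s ` {0..m}"
  proof (intro ballI notI)
    fix q assume "q \<in> {1..k}" "q \<in> s ` {0..m}"
    then obtain y where "y \<le> m" "q = s y" "q \<le> k" by auto
    thus False using s_ge_i ki by fastforce
  qed
  thus ?thesis using gstep_eq qq_props[of m] by (intro image_cong) auto
qed

lemma qq_image_in:
  assumes "x \<le> r" "r \<le> m" "s r \<le> k"
  shows "qq x ` {1..k} = p ` {1..k}"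
  using assms(1)
proof (induction x)
  case 0 thus ?case by simp
next
  case (Suc x)
  have "s (Suc x) \<le> s r" using s_mono[of "Suc x" r] Suc.prems assms by (cases "Suc x = r") auto
  hence "s (Suc x) \<in> {1..k}" "i \<in> {1..k}"
    using assms s_gt_c[of "Suc x"] Suc.prems i1 s_ge_i[of r] by auto
  hence "qq (Suc x) ` {1..k} = qq x ` {1..k}"
    by (simp del: greedy_idx.simps add: swp_image)
  thus ?case using Suc by simp
qed

lemma prefix_high: "s m \<le> k \<Longrightarrow> p' ` {1..k} = p ` {1..k}"
  using qq_image_in[of m m k] gstep_eq by simp

lemma prefix_mid:
  assumes r: "r < m" "s r \<le> k" "k < s (Suc r)"
  shows "p' ` {1..k} = insert t (p ` {1..k} - {p (s r)})"
proof -
  define P where "P = p ` {1..k}"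
  have out: "\<And>x. r < x \<Longrightarrow> x \<le> m \<Longrightarrow> s x \<notin> {1..k}"
  proof -
    fix x assume "r < x" "x \<le> m"
    hence "s (Suc r) \<le> s x" using s_mono[of "Suc r" x] by (cases "Suc r = x") auto
    thus "s x \<notin> {1..k}" using r by auto
  qed
  have iin: "i \<in> {1..k}" using i1 s_ge_i[of r] r by simp
  have main: "\<And>d. r + Suc d \<le> m \<Longrightarrow> qq (r + Suc d) ` {1..k} = insert (p (s (r + Suc d))) (P - {p (s r)})"
  proof -
    fix d show "r + Suc d \<le> m \<Longrightarrow> qq (r + Suc d) ` {1..k} = insert (p (s (r + Suc d))) (P - {p (s r)})"
    proof (induction d)
      case 0
      have qr: "qq r ` {1..k} = P" using qq_image_in[of r r k] r unfolding P_def by simp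
      have Qr: "qq r i = p (s r)" "qq r permutes {1..n}" using qq_props[of r] r by auto
      have o: "s (Suc r) \<notin> {1..k}" using out[of "Suc r"] 0 by simp
      have Qb: "qq r (s (Suc r)) = p (s (Suc r))"
      proof -
        have "s (Suc r) \<notin> s ` {0..r}"
        proof
          assume "s (Suc r) \<in> s ` {0..r}"
          then obtain y where "y \<le> r" "s (Suc r) = s y" by auto
          thus False using s_mono[of y "Suc r"] 0 by simp
        qed
        thus ?thesis using qq_props[of r] r by simp
      qed
      have "qq (Suc r) ` {1..k} = swp (qq r) i (s (Suc r)) ` {1..k}"
        by (simp del: greedy_idx.simps)
      also have "\<dots> = insert (qq r (s (Suc r))) (qq r ` {1..k} - {qq r i})"
        using swp_image_out[OF permutes_inj[OF Qr(2)] iin o] .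
      finally show ?case using qr Qr Qb by simp
    next
      case (Suc d)
      define x where "x = r + Suc d"
      have xm: "x < m" using Suc.prems x_def by simp
      have IH: "qq x ` {1..k} = insert (p (s x)) (P - {p (s r)})" using Suc x_def by simp
      have Qx: "qq x i = p (s x)" "qq x permutes {1..n}" using qq_props[of x] xm by auto
      have o: "s (Suc x) \<notin> {1..k}" using out[of "Suc x"] xm x_def by simp
      have Qb: "qq x (s (Suc x)) = p (s (Suc x))"
      proof -
        have "s (Suc x) \<notin> s ` {0..x}"
        proof
          assume "s (Suc x) \<in> s ` {0..x}"
          then obtain y where "y \<le> x" "s (Suc x) = s y" by auto
          thus False using s_mono[of y "Suc x"] xm by simp
        qed
        thus ?thesis using qq_props[of x] xm by simp
      qed
      have nP: "p (s x) \<notin> P"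
      proof
        assume "p (s x) \<in> P"
        then obtain q where "q \<in> {1..k}" "p (s x) = p q" unfolding P_def by auto
        hence "s x \<in> {1..k}" using injp by (simp add: inj_eq)
        thus False using out[of x] xm x_def by simp
      qed
      have "qq (Suc x) ` {1..k} = swp (qq x) i (s (Suc x)) ` {1..k}"
        by (simp del: greedy_idx.simps)
      also have "\<dots> = insert (qq x (s (Suc x))) (qq x ` {1..k} - {qq x i})"
        using swp_image_out[OF permutes_inj[OF Qx(2)] iin o] .
      also have "\<dots> = insert (p (s (Suc x))) (P - {p (s r)})"
        using IH Qx Qb nP by auto
      finally show ?case using x_def by simp
    qed
  qed
  have "m = r + Suc (m - r - 1)" using r by simp
  hence "qq m ` {1..k} = insert (p (s m)) (P - {p (s r)})" using main[of "m - r - 1"] by simp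
  thus ?thesis using gstep_eq psm P_def by simp
qed

lemma p'_tle:
  assumes up: "u permutes {1..n}" and uc: "u ` {1..c} = C" and tC: "t \<in> C"
    and cardC: "card (C \<inter> {..<t}) \<le> i - 1"
    and below: "\<forall>q. 1 \<le> q \<and> q < i \<longrightarrow> p q < p i" and tpu: "tle p u"
  shows "tle p' u"
  unfolding tle_def
proof (intro allI)
  fix k a
  define Pu where "Pu = u ` {1..k}"
  define Pp where "Pp = p ` {1..k}"
  have base: "card (Pu \<inter> {..<a}) \<le> card (Pp \<inter> {..<a})"
    using tpu unfolding tle_def Pu_def Pp_def by blast
  have fin: "finite (Pp \<inter> {..<a})" "finite (Pu \<inter> {..<a})" unfolding Pp_def Pu_def by auto
  show "card (u ` {1..k} \<inter> {..<a}) \<le> card (p' ` {1..k} \<inter> {..<a})"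
  proof (cases "k < i \<or> s m \<le> k")
    case True
    hence "p' ` {1..k} = Pp" using prefix_low prefix_high Pp_def by blast
    thus ?thesis using base Pu_def by simp
  next
    case False
    hence ik: "s 0 \<le> k" "k < s m" by auto
    obtain r where r: "r < m" "s r \<le> k" "k < s (Suc r)" using nat_cross[OF ik] by blast
    define z where "z = p (s r)"
    have P': "p' ` {1..k} = insert t (Pp - {z})" using prefix_mid[OF r] Pp_def z_def by simp
    have zin: "z \<in> Pp" using r s_ge_i[of r] i1 unfolding z_def Pp_def by auto
    have tnot: "t \<notin> Pp"
    proof
      assume "t \<in> Pp"
      then obtain q where "q \<in> {1..k}" "p (s m) = p q" using psm unfolding Pp_def by auto
      hence "s m \<in> {1..k}" using injp by (simp add: inj_eq)
      thus False using ik by simp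
    qed
    have zt: "z < t" using pv_mono[of r m] r psm z_def by simp
    show ?thesis
    proof (cases "a \<le> z \<or> t < a")
      case True
      have "card (p' ` {1..k} \<inter> {..<a}) = card (Pp \<inter> {..<a})"
      proof (cases "a \<le> z")
        case True
        hence "p' ` {1..k} \<inter> {..<a} = Pp \<inter> {..<a}" using P' zt by auto
        thus ?thesis by simp
      next
        case False
        hence ta: "t < a" using True by simp
        have "p' ` {1..k} \<inter> {..<a} = insert t ((Pp \<inter> {..<a}) - {z})" using P' ta zt by auto
        moreover have "z \<in> Pp \<inter> {..<a}" using zin ta zt by simp
        moreover have "t \<notin> (Pp \<inter> {..<a}) - {z}" using tnot by simp
        ultimately show ?thesis using fin
          by (metis card_insert_disjoint finite_Diff card_Suc_Diff1)
      qed
      thus ?thesis using base Pu_def by simp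
    next
      case False
      hence za: "z < a" "a \<le> t" by auto
      have P'a: "p' ` {1..k} \<inter> {..<a} = (Pp \<inter> {..<a}) - {z}" using P' za by auto
      have zina: "z \<in> Pp \<inter> {..<a}" using zin za by simp
      have cP': "card (p' ` {1..k} \<inter> {..<a}) = card (Pp \<inter> {..<a}) - 1"
        using P'a zina fin by simp
      show ?thesis
      proof (cases "c \<le> k")
        case True
        have gap: "Pp \<inter> {..<Suc t} = Pp \<inter> {..<a}"
        proof
          show "Pp \<inter> {..<Suc t} \<subseteq> Pp \<inter> {..<a}"
          proof
            fix y assume y: "y \<in> Pp \<inter> {..<Suc t}"
            show "y \<in> Pp \<inter> {..<a}"
            proof (rule ccontr)
              assume "y \<notin> Pp \<inter> {..<a}"
              hence "a \<le> y" using y by auto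
              obtain q where q: "q \<in> {1..k}" "y = p q" using y unfolding Pp_def by auto
              show False using no_gap[OF r(1), of q] q r \<open>a \<le> y\<close> y za z_def by auto
            qed
          qed
        qed (use za in auto)
        have tu: "t \<in> Pu" using tC uc True unfolding Pu_def by auto
        have "insert t (Pu \<inter> {..<a}) \<subseteq> Pu \<inter> {..<Suc t}" using tu za by auto
        hence "card (insert t (Pu \<inter> {..<a})) \<le> card (Pu \<inter> {..<Suc t})"
          by (intro card_mono) (auto simp: Pu_def)
        moreover have "card (insert t (Pu \<inter> {..<a})) = card (Pu \<inter> {..<a}) + 1"
          using fin za by simp
        moreover have "card (Pu \<inter> {..<Suc t}) \<le> card (Pp \<inter> {..<Suc t})"
          using tpu unfolding tle_def Pu_def Pp_def by blast
        ultimately have "card (Pu \<inter> {..<a}) + 1 \<le> card (Pp \<inter> {..<a})" using gap by simp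
        thus ?thesis using cP' Pu_def by simp
      next
        case False
        hence kc: "k < c" by simp
        have r0: "r = 0"
        proof (rule ccontr)
          assume "r \<noteq> 0"
          hence "c < s r" using s_gt_c[of r] r by simp
          thus False using r kc by simp
        qed
        have "Pu \<subseteq> C" using uc kc unfolding Pu_def by auto
        hence "card (Pu \<inter> {..<a}) \<le> card (C \<inter> {..<t})"
          using za uc by (intro card_mono) auto
        hence c1: "card (Pu \<inter> {..<a}) \<le> i - 1" using cardC by simp
        have "p ` {1..i-1} \<subseteq> p' ` {1..k} \<inter> {..<a}"
        proof
          fix y assume "y \<in> p ` {1..i-1}"
          then obtain q where q: "1 \<le> q" "q < i" "y = p q" using i1 by auto
          have "p q < p i" using below q by simp
          moreover have "p i = z" using r0 z_def by simp
          moreover have "q \<le> k" using q ik by simp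
          ultimately show "y \<in> p' ` {1..k} \<inter> {..<a}" using P' q za unfolding Pp_def by auto
        qed
        hence "card (p ` {1..i-1}) \<le> card (p' ` {1..k} \<inter> {..<a})" by (intro card_mono) auto
        moreover have "card (p ` {1..i-1}) = i - 1"
          using injp by (simp add: card_image inj_on_subset)
        ultimately show ?thesis using c1 Pu_def by simp
      qed
    qed
  qed
qed

end

lemma col_len_le_n: "col_len n lam j \<le> n"
proof -
  have "col_len n lam j \<le> card {1..n}" unfolding col_len_def by (intro card_mono) auto
  thus ?thesis by simp
qed

lemma col_len_mono: "col_len n lam (Suc j) \<le> col_len n lam j"
  unfolding col_len_def by (intro card_mono) auto

lemma col_len_antimono: "j \<le> j' \<Longrightarrow> col_len n lam j' \<le> col_len n lam j"
  unfolding col_len_def by (intro card_mono) auto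

locale tab =
  fixes n :: nat and lam :: "nat \<Rightarrow> nat" and T :: "nat \<Rightarrow> nat \<Rightarrow> nat"
  assumes sst: "is_sstableau n lam T"
begin

abbreviation "cl j \<equiv> col_len n lam j"

lemma T_range: "1 \<le> j \<Longrightarrow> j \<le> lam 1 \<Longrightarrow> 1 \<le> q \<Longrightarrow> q \<le> cl j \<Longrightarrow> T j q \<in> {1..n}"
  using sst unfolding is_sstableau_def by blast

lemma T_row: "1 \<le> j \<Longrightarrow> j + 1 \<le> lam 1 \<Longrightarrow> 1 \<le> q \<Longrightarrow> q \<le> cl (j + 1) \<Longrightarrow> T j q \<le> T (j + 1) q"
  using sst unfolding is_sstableau_def by blast

lemma T_col1: "1 \<le> j \<Longrightarrow> j \<le> lam 1 \<Longrightarrow> 1 \<le> q \<Longrightarrow> q + 1 \<le> cl j \<Longrightarrow> T j q < T j (q + 1)"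
  using sst unfolding is_sstableau_def by blast

lemma T_strict:
  assumes "1 \<le> j" "j \<le> lam 1" "1 \<le> q" "q < q'" "q' \<le> cl j"
  shows "T j q < T j q'"
  using assms(4,5)
proof (induction q')
  case 0 thus ?case by simp
next
  case (Suc q')
  show ?case
  proof (cases "q = q'")
    case True thus ?thesis using T_col1[of j q] assms Suc.prems by simp
  next
    case False
    hence "T j q < T j q'" using Suc by simp
    moreover have "T j q' < T j (Suc q')" using T_col1[of j q'] assms Suc.prems False by simp
    ultimately show ?thesis by simp
  qed
qed

lemma T_strict_iff:
  assumes "1 \<le> j" "j \<le> lam 1" "1 \<le> q" "q \<le> cl j" "1 \<le> q'" "q' \<le> cl j"
  shows "T j q < T j q' \<longleftrightarrow> q < q'"
  using T_strict[of j q q'] T_strict[of j q' q] assms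
  by (metis less_asym nat_neq_iff)

lemma card_col_below:
  assumes "1 \<le> j" "j \<le> lam 1" "1 \<le> q" "q \<le> cl j"
  shows "card (col_set n lam T j \<inter> {..<T j q}) \<le> q - 1"
proof -
  have "col_set n lam T j \<inter> {..<T j q} \<subseteq> T j ` {1..q-1}"
  proof
    fix y assume "y \<in> col_set n lam T j \<inter> {..<T j q}"
    then obtain q' where "q' \<in> {1..cl j}" "y = T j q'" "T j q' < T j q" unfolding col_set_def by auto
    thus "y \<in> T j ` {1..q-1}" using T_strict_iff[of j q' q] assms by auto
  qed
  hence "card (col_set n lam T j \<inter> {..<T j q}) \<le> card (T j ` {1..q-1})" by (intro card_mono) auto
  also have "\<dots> \<le> q - 1" using card_image_le[of "{1..q-1}" "T j"] by simp
  finally show ?thesis .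
qed

definition Inv :: "nat \<Rightarrow> (nat \<Rightarrow> nat) \<Rightarrow> nat \<Rightarrow> (nat \<Rightarrow> nat) \<Rightarrow> bool" where
  "Inv j p0 i pi \<longleftrightarrow> pi permutes {1..n} \<and> (\<forall>q. 1 \<le> q \<and> q \<le> i \<longrightarrow> pi q = T (j - 1) q)
     \<and> (\<forall>q. i < q \<and> q \<le> cl j \<longrightarrow> pi q = T j q) \<and> bruhat_le n p0 pi
     \<and> (\<forall>u. u permutes {1..n} \<and> u ` {1..cl j} = col_set n lam T j \<and> tle p0 u \<longrightarrow> tle pi u)"

lemma bruhat_le_trans: "bruhat_le n a b \<Longrightarrow> bruhat_le n b c \<Longrightarrow> bruhat_le n a c"
  unfolding bruhat_le_def by auto

lemma Inv_step:
  assumes j: "2 \<le> j" "j \<le> lam 1" and i: "Suc i \<le> cl j" and inv: "Inv j p0 (Suc i) pi"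
  shows "Inv j p0 i (greedy_step n lam T j (Suc i) pi)"
proof -
  define row where "row = Suc i"
  define t where "t = T j row"
  define c where "c = cl j"
  define C where "C = col_set n lam T j"
  have j1: "1 \<le> j - 1" "(j - 1) + 1 \<le> lam 1" "(j - 1) + 1 = j" using j by auto
  have ccj: "c \<le> cl (j - 1)" using col_len_antimono[of "j - 1" j n lam] c_def by simp
  have pp: "pi permutes {1..n}" and lowv: "\<forall>q. 1 \<le> q \<and> q \<le> row \<longrightarrow> pi q = T (j - 1) q"
    and highv: "\<forall>q. row < q \<and> q \<le> c \<longrightarrow> pi q = T j q" and br: "bruhat_le n p0 pi"
    and tl: "\<forall>u. u permutes {1..n} \<and> u ` {1..c} = C \<and> tle p0 u \<longrightarrow> tle pi u"
    using inv unfolding Inv_def row_def c_def C_def by auto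
  have rowc: "1 \<le> row" "row \<le> c" using i row_def c_def by auto
  have prow: "pi row = T (j - 1) row" using lowv rowc by simp
  have le: "T (j - 1) row \<le> t" using T_row[of "j - 1" row] j1 rowc c_def t_def by simp
  show ?thesis
  proof (cases "T (j - 1) row = t")
    case True
    have "greedy_step n lam T j (Suc i) pi = pi" using True by (simp add: greedy_step_def row_def t_def)
    moreover have "\<forall>q. i < q \<and> q \<le> c \<longrightarrow> pi q = T j q"
    proof (intro allI impI)
      fix q assume q: "i < q \<and> q \<le> c"
      show "pi q = T j q"
      proof (cases "q = row")
        case True thus ?thesis using prow \<open>T (j - 1) row = t\<close> t_def by simp
      next
        case False thus ?thesis using highv q row_def by simp
      qed
    qed
    moreover have "\<forall>q. 1 \<le> q \<and> q \<le> i \<longrightarrow> pi q = T (j - 1) q" using lowv row_def by simp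
    ultimately show ?thesis using pp br tl unfolding Inv_def c_def C_def by simp
  next
    case False
    hence pit: "pi row < t" using le prow by simp
    have tn: "t \<le> n" using T_range[of j row] j rowc c_def t_def by simp
    have G: "\<forall>q\<in>{1..c}. \<not> (pi row < pi q \<and> pi q \<le> t)"
    proof
      fix q assume q: "q \<in> {1..c}"
      show "\<not> (pi row < pi q \<and> pi q \<le> t)"
      proof (cases "q < row")
        case True
        hence "pi q = T (j - 1) q" using lowv q by simp
        moreover have "T (j - 1) q < T (j - 1) row"
          using T_strict[of "j - 1" q row] True j1 q rowc ccj by simp
        ultimately show ?thesis using prow by simp
      next
        case False
        show ?thesis
        proof (cases "q = row")
          case True thus ?thesis by simp
        next
          case False
          hence "row < q" using \<open>\<not> q < row\<close> by simp
          hence "pi q = T j q" using highv q by simp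
          moreover have "t < T j q" using T_strict[of j row q] \<open>row < q\<close> j q rowc c_def t_def by simp
          ultimately show ?thesis by simp
        qed
      qed
    qed
    interpret g: gsetup n c t row pi
      using pp rowc col_len_le_n[of n lam j] c_def pit tn G by unfold_locales auto
    have gs: "greedy_step n lam T j (Suc i) pi = g.p'"
      using False unfolding greedy_step_gstep row_def t_def c_def by simp
    have A: "g.p' permutes {1..n}" by (rule g.p'_permutes)
    have B: "\<forall>q. 1 \<le> q \<and> q \<le> i \<longrightarrow> g.p' q = T (j - 1) q"
      using g.p'_other lowv rowc row_def by auto
    have Cc: "\<forall>q. i < q \<and> q \<le> c \<longrightarrow> g.p' q = T j q"
    proof (intro allI impI)
      fix q assume q: "i < q \<and> q \<le> c"
      show "g.p' q = T j q"
      proof (cases "q = row")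
        case True thus ?thesis using g.p'_i t_def by simp
      next
        case False
        hence "row < q" using q row_def by simp
        thus ?thesis using g.p'_other[of q] highv q False by simp
      qed
    qed
    have D: "bruhat_le n p0 g.p'" using br g.p'_bruhat bruhat_le_trans by blast
    have E: "\<forall>u. u permutes {1..n} \<and> u ` {1..c} = C \<and> tle p0 u \<longrightarrow> tle g.p' u"
    proof (intro allI impI)
      fix u assume u: "u permutes {1..n} \<and> u ` {1..c} = C \<and> tle p0 u"
      have tC: "t \<in> C" using rowc unfolding C_def col_set_def t_def c_def by auto
      have cC: "card (C \<inter> {..<t}) \<le> row - 1"
        using card_col_below[of j row] j rowc c_def unfolding C_def t_def by simp
      have bel: "\<forall>q. 1 \<le> q \<and> q < row \<longrightarrow> pi q < pi row"
        using lowv prow T_strict[of "j - 1" _ row] j1 rowc ccj by auto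
      show "tle g.p' u" using g.p'_tle[of u C] u tC cC bel tl by blast
    qed
    show ?thesis using gs A B Cc D E unfolding Inv_def c_def C_def by simp
  qed
qed

lemma Inv_fold:
  assumes j: "2 \<le> j" "j \<le> lam 1"
  shows "i \<le> cl j \<Longrightarrow> Inv j p0 i pi \<Longrightarrow> Inv j p0 0 (fold (greedy_step n lam T j) (rev [1..<Suc i]) pi)"
proof (induction i arbitrary: pi)
  case 0 thus ?case by simp
next
  case (Suc i)
  have "Inv j p0 i (greedy_step n lam T j (Suc i) pi)" using Inv_step[OF j] Suc.prems by blast
  hence "Inv j p0 0 (fold (greedy_step n lam T j) (rev [1..<Suc i]) (greedy_step n lam T j (Suc i) pi))"
    using Suc by simp
  thus ?case by simp
qed

lemma greedy_col_Inv:
  assumes j: "2 \<le> j" "j \<le> lam 1" and pp: "p0 permutes {1..n}"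
    and pv: "\<forall>q. 1 \<le> q \<and> q \<le> cl (j - 1) \<longrightarrow> p0 q = T (j - 1) q"
  shows "Inv j p0 0 (greedy_col n lam T j p0)"
proof -
  have ccj: "cl j \<le> cl (j - 1)" using col_len_antimono[of "j - 1" j n lam] by simp
  have "Inv j p0 (cl j) p0"
    unfolding Inv_def using pp pv ccj by (auto simp: bruhat_le_def tle_refl)
  thus ?thesis using Inv_fold[OF j, of "cl j" p0] unfolding greedy_col_def by simp
qed

end

lemma sorted_take_count:
  fixes L :: "nat list"
  assumes "sorted_wrt (<) L"
  shows "card (set (take k L) \<inter> {..<a}) = min k (card (set L \<inter> {..<a}))"
  using assms
proof (induction L arbitrary: k)
  case Nil thus ?case by simp
next
  case (Cons x xs)
  have sx: "sorted_wrt (<) xs" "\<forall>y\<in>set xs. x < y" using Cons.prems by auto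
  show ?case
  proof (cases k)
    case 0 thus ?thesis by simp
  next
    case (Suc k')
    show ?thesis
    proof (cases "x < a")
      case True
      have e1: "set (take k (x # xs)) \<inter> {..<a} = insert x (set (take k' xs) \<inter> {..<a})"
        using Suc True by auto
      have e2: "set (x # xs) \<inter> {..<a} = insert x (set xs \<inter> {..<a})" using True by auto
      have n1: "x \<notin> set (take k' xs) \<inter> {..<a}" using sx(2) by (auto dest: in_set_takeD)
      have n2: "x \<notin> set xs \<inter> {..<a}" using sx(2) by auto
      show ?thesis using e1 e2 n1 n2 Cons.IH[OF sx(1), of k'] Suc by simp
    next
      case False
      have e1: "set (take k (x # xs)) \<inter> {..<a} = {}"
        using False sx(2) Suc set_take_subset[of k' xs] by fastforce
      have e2: "set (x # xs) \<inter> {..<a} = {}" using False sx(2) by auto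
      show ?thesis using e1 e2 by simp
    qed
  qed
qed

lemma nth_image_take:
  assumes "k \<le> length L"
  shows "(\<lambda>q. L ! (q - 1)) ` {1..k} = set (take k L)"
proof
  show "(\<lambda>q. L ! (q - 1)) ` {1..k} \<subseteq> set (take k L)"
  proof
    fix y assume "y \<in> (\<lambda>q. L ! (q - 1)) ` {1..k}"
    then obtain q where q: "1 \<le> q" "q \<le> k" "y = L ! (q - 1)" by auto
    hence "y = take k L ! (q - 1)" "q - 1 < length (take k L)" using assms by auto
    thus "y \<in> set (take k L)" by (metis nth_mem)
  qed
next
  show "set (take k L) \<subseteq> (\<lambda>q. L ! (q - 1)) ` {1..k}"
  proof
    fix y assume "y \<in> set (take k L)"
    then obtain i where i: "i < length (take k L)" "y = take k L ! i" by (metis in_set_conv_nth)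
    hence "y = L ! (Suc i - 1)" "Suc i \<in> {1..k}" using assms by auto
    thus "y \<in> (\<lambda>q. L ! (q - 1)) ` {1..k}" by blast
  qed
qed

lemma perm_prefix_big:
  fixes u :: "nat \<Rightarrow> nat"
  assumes "u permutes {1..n}" "n \<le> k"
  shows "u ` {1..k} = {1..k}"
proof -
  have "{1..k} = {1..n} \<union> {n<..k}" using assms(2) by auto
  moreover have "u ` {n<..k} = (\<lambda>x. x) ` {n<..k}"
    using permutes_not_in[OF assms(1)] by (intro image_cong) auto
  ultimately show ?thesis using permutes_image[OF assms(1)] by (simp add: image_Un)
qed

context tab begin

lemma init_facts:
  assumes l1: "1 \<le> lam 1"
  shows "greedy_init n lam T permutes {1..n}"
    and "\<forall>q. 1 \<le> q \<and> q \<le> cl 1 \<longrightarrow> greedy_init n lam T q = T 1 q"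
    and "\<forall>u. u permutes {1..n} \<and> u ` {1..cl 1} = col_set n lam T 1 \<longrightarrow> tle (greedy_init n lam T) u"
proof -
  define c where "c = cl 1"
  define C where "C = col_set n lam T 1"
  define R where "R = {1..n} - C"
  define CL where "CL = sorted_list_of_set C"
  define RL where "RL = sorted_list_of_set R"
  define L where "L = CL @ RL"
  have cn: "c \<le> n" using col_len_le_n c_def by simp
  have Csub: "C \<subseteq> {1..n}" using T_range[of 1] l1 unfolding C_def col_set_def c_def by auto
  have finC: "finite C" "finite R" unfolding C_def col_set_def R_def by auto
  have injT: "inj_on (T 1) {1..c}"
  proof (rule inj_onI)
    fix x y assume xy: "x \<in> {1..c}" "y \<in> {1..c}" "T 1 x = T 1 y"
    show "x = y"
    proof (rule ccontr)
      assume "x \<noteq> y"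
      hence "x < y \<or> y < x" by auto
      thus False using T_strict[of 1 x y] T_strict[of 1 y x] l1 xy c_def by auto
    qed
  qed
  have cardC: "card C = c" using injT unfolding C_def col_set_def c_def by (simp add: card_image)
  have cardR: "card R = n - c" unfolding R_def using Csub cardC finC by (simp add: card_Diff_subset)
  have lCL: "length CL = c" using cardC CL_def by simp
  have lRL: "length RL = n - c" using cardR RL_def by simp
  have sCL: "sorted_wrt (<) CL" "set CL = C" using finC CL_def by auto
  have sRL: "sorted_wrt (<) RL" "set RL = R" using finC RL_def by auto
  have lL: "length L = n" using lCL lRL cn L_def by simp
  have setL: "set L = {1..n}" using sCL sRL Csub L_def R_def by auto
  have dL: "distinct L" using sCL sRL L_def R_def by (auto simp: strict_sorted_iff)
  have gi: "greedy_init n lam T k = (if 1 \<le> k \<and> k \<le> n then L ! (k - 1) else k)" for k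
  proof -
    have "greedy_init n lam T k = (if 1 \<le> k \<and> k \<le> c then CL ! (k - 1)
         else if c < k \<and> k \<le> n then RL ! (k - c - 1) else k)"
      unfolding greedy_init_def Let_def c_def CL_def RL_def C_def R_def by simp
    thus ?thesis using lCL cn unfolding L_def by (auto simp: nth_append)
  qed
  have img: "greedy_init n lam T ` {1..k} = set (take k L)" if "k \<le> n" for k
  proof -
    have "greedy_init n lam T ` {1..k} = (\<lambda>q. L ! (q - 1)) ` {1..k}"
      using that by (intro image_cong) (auto simp: gi)
    thus ?thesis using nth_image_take[of k L] that lL by simp
  qed
  show perm: "greedy_init n lam T permutes {1..n}"
  proof (rule bij_imp_permutes)
    have "inj_on (greedy_init n lam T) {1..n}"
    proof (rule inj_onI)
      fix x y assume xy: "x \<in> {1..n}" "y \<in> {1..n}" "greedy_init n lam T x = greedy_init n lam T y"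
      hence "L ! (x - 1) = L ! (y - 1)" by (simp add: gi)
      hence "x - 1 = y - 1" using nth_eq_iff_index_eq[OF dL, of "x - 1" "y - 1"] lL xy by auto
      thus "x = y" using xy(1,2) by (simp only: atLeastAtMost_iff) arith
    qed
    moreover have "greedy_init n lam T ` {1..n} = {1..n}" using img[of n] lL setL by simp
    ultimately show "bij_betw (greedy_init n lam T) {1..n} {1..n}" by (simp add: bij_betw_def)
  next
    fix x assume "x \<notin> {1..n}" thus "greedy_init n lam T x = x" using gi[of x] by auto
  qed
  have CLeq: "CL = map (T 1) [1..<Suc c]"
  proof -
    have "sorted_wrt (<) (map (T 1) [1..<Suc c])"
      unfolding sorted_wrt_map
      by (rule sorted_wrt_mono_rel[OF _ sorted_wrt_upt]) (use T_strict[of 1] l1 c_def in auto)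
    moreover have "set (map (T 1) [1..<Suc c]) = C" unfolding C_def col_set_def c_def by auto
    moreover have "length (map (T 1) [1..<Suc c]) = card C" using cardC by simp
    ultimately show ?thesis using sorted_list_of_set_unique[OF finC(1)] CL_def by blast
  qed
  show "\<forall>q. 1 \<le> q \<and> q \<le> cl 1 \<longrightarrow> greedy_init n lam T q = T 1 q"
  proof (intro allI impI)
    fix q assume q: "1 \<le> q \<and> q \<le> cl 1"
    have ql: "q - 1 < length CL" using q lCL c_def by linarith
    have qn: "1 \<le> q \<and> q \<le> n" using q cn c_def by linarith
    have "greedy_init n lam T q = L ! (q - 1)" using gi[of q] qn by simp
    also have "\<dots> = CL ! (q - 1)" using ql L_def by (simp add: nth_append)
    also have "\<dots> = T 1 q"
    proof -
      have "q - 1 < length [1..<Suc c]" using q c_def by (simp only: length_upt) linarith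
      moreover have "[1..<Suc c] ! (q - 1) = q" using q c_def by (subst nth_upt) linarith+
      ultimately show ?thesis using CLeq by (simp del: upt_Suc)
    qed
    finally show "greedy_init n lam T q = T 1 q" .
  qed
  show "\<forall>u. u permutes {1..n} \<and> u ` {1..cl 1} = col_set n lam T 1 \<longrightarrow> tle (greedy_init n lam T) u"
  proof (intro allI impI)
    fix u assume u: "u permutes {1..n} \<and> u ` {1..cl 1} = col_set n lam T 1"
    hence up: "u permutes {1..n}" and uc: "u ` {1..c} = C" using c_def C_def by auto
    have iu: "inj u" using up permutes_inj by auto
    show "tle (greedy_init n lam T) u" unfolding tle_def
    proof (intro allI)
      fix k a
      show "card (u ` {1..k} \<inter> {..<a}) \<le> card (greedy_init n lam T ` {1..k} \<inter> {..<a})"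
      proof (cases "n \<le> k")
        case True
        thus ?thesis using perm_prefix_big[OF up True] perm_prefix_big[OF perm True] by simp
      next
        case False
        hence kn: "k \<le> n" by simp
        have cu: "card (u ` {1..k}) = k" using iu by (simp add: card_image inj_on_subset)
        show ?thesis
        proof (cases "k \<le> c")
          case True
          have gk: "greedy_init n lam T ` {1..k} = set (take k CL)"
            using img[OF kn] True lCL L_def by simp
          have sub: "u ` {1..k} \<subseteq> C" using uc True by auto
          have "card (u ` {1..k} \<inter> {..<a}) \<le> card (C \<inter> {..<a})"
            using sub finC by (intro card_mono) auto
          moreover have "card (u ` {1..k} \<inter> {..<a}) \<le> k"
            using cu card_mono[of "u ` {1..k}" "u ` {1..k} \<inter> {..<a}"] by auto
          ultimately show ?thesis using gk sorted_take_count[OF sCL(1), of k a] sCL(2) by simp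
        next
          case False
          hence ck: "c < k" by simp
          have gk: "greedy_init n lam T ` {1..k} = C \<union> set (take (k - c) RL)"
            using img[OF kn] ck lCL L_def sCL by simp
          have dis: "C \<inter> set (take (k - c) RL) = {}" using sRL R_def by (auto dest: in_set_takeD)
          have e1: "card (greedy_init n lam T ` {1..k} \<inter> {..<a})
              = card (C \<inter> {..<a}) + card (set (take (k - c) RL) \<inter> {..<a})"
          proof -
            have "greedy_init n lam T ` {1..k} \<inter> {..<a} = (C \<inter> {..<a}) \<union> (set (take (k - c) RL) \<inter> {..<a})"
              using gk by auto
            thus ?thesis using dis finC by (simp add: card_Un_disjoint disjoint_iff)
          qed
          define X where "X = u ` {1..k} - C"
          have Csu: "C \<subseteq> u ` {1..k}" using uc ck by auto
          have XR: "X \<subseteq> R" unfolding X_def R_def using permutes_image[OF up] kn by auto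
          have cX: "card X = k - c" unfolding X_def using Csu cu cardC finC
            by (simp add: card_Diff_subset)
          have e2: "card (u ` {1..k} \<inter> {..<a}) = card (C \<inter> {..<a}) + card (X \<inter> {..<a})"
          proof -
            have "u ` {1..k} \<inter> {..<a} = (C \<inter> {..<a}) \<union> (X \<inter> {..<a})" using Csu X_def by auto
            moreover have "finite X" unfolding X_def by simp
            ultimately show ?thesis using finC unfolding X_def by (simp add: card_Un_disjoint disjoint_iff)
          qed
          have "card (X \<inter> {..<a}) \<le> card (R \<inter> {..<a})" using XR finC by (intro card_mono) auto
          moreover have "card (X \<inter> {..<a}) \<le> k - c"
            using cX card_mono[of X "X \<inter> {..<a}"] X_def by auto
          ultimately have "card (X \<inter> {..<a}) \<le> card (set (take (k - c) RL) \<inter> {..<a})"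
            using sorted_take_count[OF sRL(1), of "k - c" a] sRL(2) by simp
          thus ?thesis using e1 e2 by simp
        qed
      qed
    qed
  qed
qed

end

context tab begin

lemma greedy_Q:
  "1 \<le> j \<Longrightarrow> j \<le> lam 1 \<Longrightarrow> greedy n lam T j permutes {1..n}
    \<and> (\<forall>q. 1 \<le> q \<and> q \<le> cl j \<longrightarrow> greedy n lam T j q = T j q)
    \<and> (\<forall>u. u permutes {1..n} \<and> u ` {1..cl j} = col_set n lam T j
          \<and> (2 \<le> j \<longrightarrow> tle (greedy n lam T (j - 1)) u) \<longrightarrow> tle (greedy n lam T j) u)
    \<and> (2 \<le> j \<longrightarrow> bruhat_le n (greedy n lam T (j - 1)) (greedy n lam T j))"
proof (induction j)
  case 0 thus ?case by simp
next
  case (Suc j)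
  show ?case
  proof (cases j)
    case 0
    thus ?thesis using init_facts[of] Suc.prems by simp
  next
    case (Suc j')
    have j1: "1 \<le> j" "j \<le> lam 1" using Suc \<open>Suc j \<le> lam 1\<close> by auto
    have IH: "greedy n lam T j permutes {1..n}"
      "\<forall>q. 1 \<le> q \<and> q \<le> cl j \<longrightarrow> greedy n lam T j q = T j q"
      using Suc.IH[OF j1] by auto
    have "Inv (Suc j) (greedy n lam T j) 0 (greedy_col n lam T (Suc j) (greedy n lam T j))"
      using greedy_col_Inv[of "Suc j" "greedy n lam T j"] IH Suc.prems Suc by simp
    moreover have "greedy n lam T (Suc j) = greedy_col n lam T (Suc j) (greedy n lam T j)"
      using Suc by simp
    ultimately show ?thesis unfolding Inv_def using Suc by auto
  qed
qed

end

theorem proposition6p1: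
  fixes n :: nat and lam :: "nat \<Rightarrow> nat" and T :: "nat \<Rightarrow> nat \<Rightarrow> nat"
    and w :: "nat \<Rightarrow> nat \<Rightarrow> nat"
  assumes "1 \<le> n"
    and "is_npartition n lam"
    and "lam n = 0"
    and "\<exists>i\<in>{1..n}. lam i \<noteq> 0"
    and "is_sstableau n lam T"
    and "minimal_defining_chain n lam T w"
  shows "\<forall>j. 1 \<le> j \<longrightarrow> j \<le> lam 1 \<longrightarrow> w j = greedy n lam T j"
proof -
  interpret tab n lam T using assms(5) by unfold_locales
  define G where "G = greedy n lam T"
  have dc: "defining_chain n lam T w"
    and mn: "\<And>v j. defining_chain n lam T v \<Longrightarrow> 1 \<le> j \<Longrightarrow> j \<le> lam 1 \<Longrightarrow> bruhat_le n (w j) (v j)"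
    using assms(6) unfolding minimal_defining_chain_def by auto
  have Q: "\<And>j. 1 \<le> j \<Longrightarrow> j \<le> lam 1 \<Longrightarrow> G j permutes {1..n}
    \<and> (\<forall>q. 1 \<le> q \<and> q \<le> cl j \<longrightarrow> G j q = T j q)
    \<and> (\<forall>u. u permutes {1..n} \<and> u ` {1..cl j} = col_set n lam T j
          \<and> (2 \<le> j \<longrightarrow> tle (G (j - 1)) u) \<longrightarrow> tle (G j) u)
    \<and> (2 \<le> j \<longrightarrow> bruhat_le n (G (j - 1)) (G j))"
    unfolding G_def by (rule greedy_Q)
  have gdc: "defining_chain n lam T G"
    unfolding defining_chain_def
  proof (intro conjI allI impI)
    fix j assume "1 \<le> j" "j \<le> lam 1"
    thus "G j permutes {1..n}" using Q by blast
  next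
    fix j assume j: "1 \<le> j" "j < lam 1"
    have "bruhat_le n (G (Suc j - 1)) (G (Suc j))" using Q[of "Suc j"] j by simp
    thus "bruhat_le n (G j) (G (j + 1))" by simp
  next
    fix j assume j: "1 \<le> j" "j \<le> lam 1"
    have "\<forall>q. 1 \<le> q \<and> q \<le> cl j \<longrightarrow> G j q = T j q" using Q j by blast
    hence "G j ` {1..cl j} = T j ` {1..cl j}" by (intro image_cong) auto
    thus "G j ` {1..cl j} = col_set n lam T j" by (simp add: col_set_def)
  qed
  have wp: "\<And>j. 1 \<le> j \<Longrightarrow> j \<le> lam 1 \<Longrightarrow> w j permutes {1..n} \<and> w j ` {1..cl j} = col_set n lam T j"
    using dc unfolding defining_chain_def by blast
  have wle: "\<And>j. 1 \<le> j \<Longrightarrow> j < lam 1 \<Longrightarrow> bruhat_le n (w j) (w (j + 1))"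
    using dc unfolding defining_chain_def by blast
  have main: "1 \<le> j \<Longrightarrow> j \<le> lam 1 \<Longrightarrow> w j = G j" for j
  proof (induction j)
    case 0 thus ?case by simp
  next
    case (Suc j)
    have t1: "tle (w (Suc j)) (G (Suc j))" using mn[OF gdc Suc.prems] bruhat_le_tle by blast
    have QS: "G (Suc j) permutes {1..n}"
      "\<forall>u. u permutes {1..n} \<and> u ` {1..cl (Suc j)} = col_set n lam T (Suc j)
          \<and> (2 \<le> Suc j \<longrightarrow> tle (G (Suc j - 1)) u) \<longrightarrow> tle (G (Suc j)) u"
      using Q[OF Suc.prems] by auto
    have t2: "tle (G (Suc j)) (w (Suc j))"
    proof (cases j)
      case 0 thus ?thesis using QS(2) wp[OF Suc.prems] by simp
    next
      case (Suc j')
      have j1: "1 \<le> j" "j \<le> lam 1" "j < lam 1" using Suc \<open>Suc j \<le> lam 1\<close> by auto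
      have "w j = G j" using Suc.IH j1 by simp
      hence "tle (G j) (w (Suc j))" using wle[OF j1(1,3)] bruhat_le_tle by simp
      thus ?thesis using QS(2) wp[OF \<open>1 \<le> Suc j\<close> \<open>Suc j \<le> lam 1\<close>] Suc by simp
    qed
    show ?case using tle_antisym[OF _ QS(1) t1 t2] wp[OF Suc.prems] by simp
  qed
  show ?thesis using main G_def by simp
qed

end
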